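(* Let $\alpha\in\mathbb{N}_0$ and let $L_{2\alpha+4,x}^{\alpha}y(x)=(-1)^{\alpha+1}e^x x\,D_x^{\alpha+2}\{e^{-x}D_x^{\alpha+2}[x^{\alpha+1}y(x)]\}$. Then for all $n\in\mathbb{N}$, $$\big[L_{2\alpha+4,x}^{\alpha}+(n)_{\alpha+2}\big]T_n^{\alpha}(x)=0,\qquad 0\le x<\infty.$$
   Context: $D_x^i$ is the $i$-fold derivative; $(a)_k$ is the Pochhammer symbol. $L_n^{\gamma}(x)=\frac{(\gamma+1)_n}{n!}{}_1F_1(-n;\gamma+1;x)$ are the Laguerre polynomials, and for $n\ge1$, $T_n^{\alpha}(x)=-t_n^{\alpha}\,x\,L_{n-1}^{\alpha+2}(x)$ with $t_n^{\alpha}=(\alpha+2)_{n-1}/n!$. *)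

theory Defs
  imports "HOL-Analysis.Analysis"
begin

text \<open>Terminating confluent hypergeometric series 1F1(-n; b; x)
  = sum over k = 0..n of (-n)_k / ((b)_k k!) x^k (terms with k > n vanish).\<close>
definition hyp1F1_neg :: "nat \<Rightarrow> real \<Rightarrow> real \<Rightarrow> real" where
  "hyp1F1_neg n b x =
     (\<Sum>k\<le>n. pochhammer (- real n) k / (pochhammer b k * fact k) * x ^ k)"

definition laguerre :: "nat \<Rightarrow> real \<Rightarrow> real \<Rightarrow> real" where
  "laguerre n \<gamma> x = pochhammer (\<gamma> + 1) n / fact n * hyp1F1_neg n (\<gamma> + 1) x"

definition tcoef :: "nat \<Rightarrow> nat \<Rightarrow> real" where
  "tcoef \<alpha> n = pochhammer (real \<alpha> + 2) (n - 1) / fact n"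

definition Tpoly :: "nat \<Rightarrow> nat \<Rightarrow> real \<Rightarrow> real" where
  "Tpoly \<alpha> n x = - tcoef \<alpha> n * x * laguerre (n - 1) (real \<alpha> + 2) x"

definition Lop :: "nat \<Rightarrow> (real \<Rightarrow> real) \<Rightarrow> real \<Rightarrow> real" where
  "Lop \<alpha> y x = (-1) ^ (\<alpha> + 1) * exp x * x *
     (deriv ^^ (\<alpha> + 2)) (\<lambda>t. exp (- t) * (deriv ^^ (\<alpha> + 2)) (\<lambda>s. s ^ (\<alpha> + 1) * y s) t) x"

end

theory Submission
  imports Defs "HOL-Computational_Algebra.Polynomial"
begin

lemma poch_fact: "fact b * pochhammer (real b + 1) m = (fact (b + m) :: real)"
proof (induction m)
  case (Suc m)
  have "fact b * pochhammer (real b + 1) (Suc m) = (fact b * pochhammer (real b + 1) m) * (real b + 1 + real m)"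
    by (simp add: pochhammer_Suc)
  also have "\<dots> = fact (b + m) * real (Suc (b + m))" using Suc by simp
  also have "\<dots> = fact (b + Suc m)" by (simp add: algebra_simps)
  finally show ?case .
qed simp

lemma poch_fact': "pochhammer (real b + 1) m = (fact (b + m) :: real) / fact b"
  using poch_fact[of b m] by (simp add: field_simps)

lemma poch_neg: "k \<le> m \<Longrightarrow> pochhammer (- real m) k = (-1)^k * fact m / fact (m - k)"
proof -
  assume k: "k \<le> m"
  have "pochhammer (- real m) k = (-1)^k * pochhammer (real m - real k + 1) k"
    by (simp add: pochhammer_minus)
  also have "real m - real k = real (m - k)" using k by simp
  also have "pochhammer (real (m - k) + 1) k = fact (m - k + k) / fact (m - k)"
    by (rule poch_fact')
  finally show ?thesis using k by simp
qed

definition lc :: "nat \<Rightarrow> nat \<Rightarrow> nat \<Rightarrow> real" where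
  "lc b m k = (if k \<le> m then (-1)^k * real (m + b choose (m - k)) / fact k else 0)"

definition Lp :: "nat \<Rightarrow> nat \<Rightarrow> real poly" where
  "Lp b m = (\<Sum>k\<le>m. monom (lc b m k) k)"

lemma coeff_Lp: "coeff (Lp b m) k = lc b m k"
  by (simp add: Lp_def coeff_sum coeff_monom lc_def)

lemma poly_Lp: "poly (Lp b m) x = (\<Sum>k\<le>m. lc b m k * x ^ k)"
  by (simp add: Lp_def poly_sum poly_monom)

lemma laguerre_Lp: "laguerre m (real b) x = poly (Lp b m) x"
proof -
  have "laguerre m (real b) x = (\<Sum>k\<le>m. pochhammer (real b + 1) m / fact m *
     (pochhammer (- real m) k / (pochhammer (real b + 1) k * fact k) * x ^ k))"
    by (simp add: laguerre_def hyp1F1_neg_def sum_distrib_left)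
  also have "\<dots> = (\<Sum>k\<le>m. lc b m k * x ^ k)"
  proof (rule sum.cong)
    fix k assume "k \<in> {..m}"
    hence k: "k \<le> m" by simp
    have bf: "real (m + b choose (m - k)) = fact (m + b) / (fact (m - k) * fact (b + k))"
      using k by (simp add: binomial_fact)
    show "pochhammer (real b + 1) m / fact m *
     (pochhammer (- real m) k / (pochhammer (real b + 1) k * fact k) * x ^ k) = lc b m k * x ^ k"
      unfolding poch_fact' poch_neg[OF k] lc_def using k bf by (simp add: field_simps add.commute)
  qed simp
  finally show ?thesis by (simp add: poly_Lp)
qed

lemma deriv_poly_iter: "(deriv ^^ j) (poly p) = poly ((pderiv ^^ j) p)"
proof (induction j)
  case (Suc j)
  show ?case unfolding funpow.simps comp_def Suc.IH by (simp add: fun_eq_iff DERIV_imp_deriv[OF poly_DERIV])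
qed simp

definition E :: "real poly \<Rightarrow> real poly" where "E q = pderiv q - q"

lemma deriv_exp_poly: "deriv (\<lambda>t. exp (- t) * poly p t) = (\<lambda>t. exp (- t) * poly (E p) t)"
proof
  fix t :: real
  have "((\<lambda>t. exp (- t) * poly p t) has_real_derivative
      (exp (- t) * (-1) * poly p t + exp (- t) * poly (pderiv p) t)) (at t)"
    by (auto intro!: derivative_eq_intros poly_DERIV)
  then show "deriv (\<lambda>t. exp (- t) * poly p t) t = exp (- t) * poly (E p) t"
    by (simp add: DERIV_imp_deriv E_def algebra_simps)
qed

lemma deriv_exp_poly_iter:
  "(deriv ^^ j) (\<lambda>t. exp (- t) * poly p t) = (\<lambda>t. exp (- t) * poly ((E ^^ j) p) t)"
  by (induction j) (simp_all add: deriv_exp_poly)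

lemma E_iter: "(E ^^ b) (smult c (Lp 0 m)) = smult (c * (-1)^b) (Lp b m)"
proof (induction b)
  case (Suc b)
  have "E (smult (c * (-1)^b) (Lp b m)) = smult (c * (-1)^Suc b) (Lp (Suc b) m)"
  proof (rule poly_eqI)
    fix k
    have key: "real (Suc k) * lc b m (Suc k) - lc b m k = - lc (Suc b) m k"
    proof (cases "k < m")
      case True
      then obtain j where j: "m - k = Suc j" "m - Suc k = j"
        by (metis Suc_diff_Suc)
      have "real (m + Suc b choose (m - k)) = real (m + b choose j) + real (m + b choose Suc j)"
        using j by simp
      moreover have "real (Suc k) * ((-1)^Suc k * real (m + b choose j) / fact (Suc k))
          = - ((-1)^k * real (m + b choose j) / fact k)"
        by (simp add: fact_Suc field_simps del: of_nat_Suc)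
      ultimately show ?thesis using True j
        by (simp add: lc_def field_simps del: of_nat_Suc)
    next
      case False
      then show ?thesis by (cases "k = m") (simp_all add: lc_def)
    qed
    show "coeff (E (smult (c * (-1)^b) (Lp b m))) k = coeff (smult (c * (-1)^Suc b) (Lp (Suc b) m)) k"
      using key[symmetric] by (simp add: E_def coeff_pderiv coeff_Lp algebra_simps)
  qed
  then show ?case using Suc by simp
qed simp

lemma pderiv_iter_smult: "(pderiv ^^ j) (smult c p) = smult c ((pderiv ^^ j) p)"
  by (induction j) (simp_all add: pderiv_smult)

lemma pderiv_iter_minus: "(pderiv ^^ j) (- p) = - ((pderiv ^^ j) (p :: real poly))"
  by (induction j) (simp_all add: pderiv_minus)

lemma pderiv_iter_Lp:
  "(pderiv ^^ a) (monom 1 a * Lp a m) = smult (pochhammer (real m + 1) a) (Lp 0 m)"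
proof (rule poly_eqI)
  fix k
  have "pochhammer (real (Suc k)) a * lc a m k = pochhammer (real m + 1) a * lc 0 m k"
  proof (cases "k \<le> m")
    case True
    have b1: "real (m + a choose (m - k)) = fact (m + a) / (fact (m - k) * fact (a + k))"
      using True by (simp add: binomial_fact)
    have b2: "real (m choose (m - k)) = fact m / (fact (m - k) * fact k)"
      using True by (simp add: binomial_fact)
    have p1: "pochhammer (1 + real k) a = fact (k + a) / fact k"
      using poch_fact'[of k a] by (simp add: add.commute)
    have p2: "pochhammer (1 + real m) a = fact (m + a) / fact m"
      using poch_fact'[of m a] by (simp add: add.commute)
    have b1': "real (a + m choose (m - k)) = fact (m + a) / (fact (m - k) * fact (a + k))"
      using b1 by (simp add: add.commute)
    show ?thesis using True
      by (simp add: lc_def b1' b2 p1 p2 field_simps add.commute)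
  qed (simp add: lc_def)
  then show "coeff ((pderiv ^^ a) (monom 1 a * Lp a m)) k =
     coeff (smult (pochhammer (real m + 1) a) (Lp 0 m)) k"
    by (simp add: coeff_higher_pderiv coeff_monom_mult coeff_Lp)
qed

theorem corollary2p2:
  fixes \<alpha> n :: nat and x :: real
  assumes "n \<ge> 1" and "0 \<le> x"
  shows "Lop \<alpha> (Tpoly \<alpha> n) x + pochhammer (real n) (\<alpha> + 2) * Tpoly \<alpha> n x = 0"
proof -
  define m where "m = n - 1"
  define a where "a = \<alpha> + 2"
  define t where "t = tcoef \<alpha> n"
  define P where "P = pochhammer (real n) a"
  have nm: "real n = real m + 1" using assms(1) by (simp add: m_def)
  have T: "Tpoly \<alpha> n s = - t * s * poly (Lp a m) s" for s
    using laguerre_Lp[of m a s] by (simp add: Tpoly_def t_def m_def a_def add.commute)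
  have inner: "(\<lambda>s. s ^ (\<alpha> + 1) * Tpoly \<alpha> n s) = poly (smult (- t) (monom 1 a * Lp a m))"
    by (simp add: fun_eq_iff T a_def poly_monom)
  have d1: "(deriv ^^ (\<alpha> + 2)) (\<lambda>s. s ^ (\<alpha> + 1) * Tpoly \<alpha> n s) =
        poly (smult (- t * P) (Lp 0 m))"
    unfolding inner deriv_poly_iter a_def[symmetric]
    by (simp add: pderiv_iter_smult pderiv_iter_minus pderiv_iter_Lp P_def nm)
  have d2: "(deriv ^^ (\<alpha> + 2)) (\<lambda>t'. exp (- t') * (deriv ^^ (\<alpha> + 2)) (\<lambda>s. s ^ (\<alpha> + 1) * Tpoly \<alpha> n s) t')
     = (\<lambda>t'. exp (- t') * poly (smult (- t * P * (-1)^a) (Lp a m)) t')"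
    unfolding d1 unfolding deriv_exp_poly_iter a_def[symmetric] E_iter by simp
  have ee: "exp x * exp (- x) = 1" by (simp add: exp_minus)
  have "Lop \<alpha> (Tpoly \<alpha> n) x = (-1) ^ (\<alpha> + 1) * (exp x * exp (- x)) * x * (- t * P * (-1)^a) * poly (Lp a m) x"
    unfolding Lop_def d2 by simp
  also have "\<dots> = t * P * x * poly (Lp a m) x"
    by (simp add: ee a_def)
  finally show ?thesis by (simp add: T P_def a_def)
qed

end
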